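(* Let $n\ge 2$. An identity $w=w'$ (with $w,w'\in X^*$) holds in the monoid $\mathrm{Styl}_n$ if and only if the words $w$ and $w'$ have the same set of scattered subwords of length at most $n$.
   Context: A monoid identity $w=w'$ with $w,w'$ in the free monoid $X^*$ holds in a monoid $M$ if $w\varphi=w'\varphi$ for every homomorphism $\varphi\colon X^*\to M$. The stylic monoid $\mathrm{Styl}_n$ is generated by $a_1,\dots,a_n$ subject to: $a_i^2=a_i$ ($1\le i\le n$); $a_ja_ia_k=a_ja_ka_i$ and $a_ia_ka_j=a_ka_ia_j$ for $1\le i<j<k\le n$; $a_ja_ia_i=a_ia_ja_i$ and $a_ja_ja_i=a_ja_ia_j$ for $1\le i<j\le n$. A word $x_1\cdots x_k$ with $x_1,\dots,x_k\in X$ is a scattered subword of length $k$ of $v\in X^*$ if there exist $v_0,\dots,v_k\in X^*$ with $v=v_0x_1v_1\cdots v_{k-1}x_kv_k$. *)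

theory Defs
  imports Main "HOL-Library.Sublist"
begin

text \<open>Words over the generators a_1..a_n of Styl_n are represented as lists of
natural numbers with letters in {1..n} (letter i stands for a_i).\<close>

definition styl_rels :: "nat \<Rightarrow> (nat list \<times> nat list) set" where
  "styl_rels n =
     {([i,i],[i]) | i. 1 \<le> i \<and> i \<le> n}
   \<union> {([j,i,k],[j,k,i]) | i j k. 1 \<le> i \<and> i < j \<and> j < k \<and> k \<le> n}
   \<union> {([i,k,j],[k,i,j]) | i j k. 1 \<le> i \<and> i < j \<and> j < k \<and> k \<le> n}
   \<union> {([j,i,i],[i,j,i]) | i j. 1 \<le> i \<and> i < j \<and> j \<le> n}
   \<union> {([j,j,i],[j,i,j]) | i j. 1 \<le> i \<and> i < j \<and> j \<le> n}"

inductive styl_cong :: "nat \<Rightarrow> nat list \<Rightarrow> nat list \<Rightarrow> bool" for n where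
  rel: "(l, r) \<in> styl_rels n \<Longrightarrow> styl_cong n (u @ l @ v) (u @ r @ v)"
| refl: "styl_cong n u u"
| sym: "styl_cong n u v \<Longrightarrow> styl_cong n v u"
| trans: "styl_cong n u v \<Longrightarrow> styl_cong n v w \<Longrightarrow> styl_cong n u w"

definition styl_words :: "nat \<Rightarrow> nat list set" where
  "styl_words n = {u. set u \<subseteq> {1..n}}"

text \<open>A homomorphism X^* \<rightarrow> Styl_n, each element of Styl_n being represented by a
word over {1..n} (an element of its congruence class).\<close>
definition styl_hom :: "nat \<Rightarrow> ('x list \<Rightarrow> nat list) \<Rightarrow> bool" where
  "styl_hom n \<phi> \<longleftrightarrow>
     (\<forall>w. \<phi> w \<in> styl_words n)
   \<and> styl_cong n (\<phi> []) []
   \<and> (\<forall>u v. styl_cong n (\<phi> (u @ v)) (\<phi> u @ \<phi> v))"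

definition holds_in_styl :: "nat \<Rightarrow> 'x list \<Rightarrow> 'x list \<Rightarrow> bool" where
  "holds_in_styl n w w' \<longleftrightarrow> (\<forall>\<phi>. styl_hom n \<phi> \<longrightarrow> styl_cong n (\<phi> w) (\<phi> w'))"

definition scattered_subwords_le :: "nat \<Rightarrow> 'x list \<Rightarrow> 'x list set" where
  "scattered_subwords_le n w = {s. subseq s w \<and> length s \<le> n}"

end

theory Submission
  imports Defs
begin

lemma cong_ctx: "styl_cong n u v \<Longrightarrow> styl_cong n (x @ u @ y) (x @ v @ y)"
proof (induction rule: styl_cong.induct)
  case (rel l r u v)
  then show ?case using styl_cong.rel[OF rel(1), of "x @ u" "v @ y"] by simp
next
  case (refl u) then show ?case by (rule styl_cong.refl)
next
  case (sym u v) then show ?case by (metis styl_cong.sym)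
next
  case (trans u v w) then show ?case by (metis styl_cong.trans)
qed

lemma cong_ctxL: "styl_cong n u v \<Longrightarrow> styl_cong n (x @ u) (x @ v)"
  using cong_ctx[of n u v x "[]"] by simp
lemma cong_ctxR: "styl_cong n u v \<Longrightarrow> styl_cong n (u @ y) (v @ y)"
  using cong_ctx[of n u v "[]" y] by simp

lemma relc: "(l, r) \<in> styl_rels n \<Longrightarrow> styl_cong n l r"
  using styl_cong.rel[of l r n "[]" "[]"] by simp

lemma R_idem: "1 \<le> i \<Longrightarrow> i \<le> n \<Longrightarrow> styl_cong n [i,i] [i]"
  by (rule relc) (auto simp: styl_rels_def)
lemma R_jik: "1 \<le> i \<Longrightarrow> i < j \<Longrightarrow> j < k \<Longrightarrow> k \<le> n \<Longrightarrow> styl_cong n [j,i,k] [j,k,i]"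
  by (rule relc) (unfold styl_rels_def, blast)
lemma R_ikj: "1 \<le> i \<Longrightarrow> i < j \<Longrightarrow> j < k \<Longrightarrow> k \<le> n \<Longrightarrow> styl_cong n [i,k,j] [k,i,j]"
  by (rule relc) (unfold styl_rels_def, blast)
lemma R_jii: "1 \<le> i \<Longrightarrow> i < j \<Longrightarrow> j \<le> n \<Longrightarrow> styl_cong n [j,i,i] [i,j,i]"
  by (rule relc) (unfold styl_rels_def, blast)
lemma R_jji: "1 \<le> i \<Longrightarrow> i < j \<Longrightarrow> j \<le> n \<Longrightarrow> styl_cong n [j,j,i] [j,i,j]"
  by (rule relc) (unfold styl_rels_def, blast)

lemma ctrans: "styl_cong n u v \<Longrightarrow> styl_cong n v w \<Longrightarrow> styl_cong n u w"
  by (rule styl_cong.trans)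
lemma csym: "styl_cong n u v \<Longrightarrow> styl_cong n v u"
  by (rule styl_cong.sym)

abbreviation inc :: "nat set \<Rightarrow> nat list" where "inc S \<equiv> sorted_list_of_set S"

lemma inc_eq: "finite S \<Longrightarrow> sorted_wrt (<) xs \<Longrightarrow> set xs = S \<Longrightarrow> inc S = xs"
  by (metis strict_sorted_equal sorted_list_of_set.strict_sorted_key_list_of_set
      sorted_list_of_set.set_sorted_key_list_of_set)

lemma moveH: "sorted_wrt (<) (z # H) \<Longrightarrow> a < z \<Longrightarrow> 1 \<le> a \<Longrightarrow> (\<forall>h \<in> set H. h \<le> n)
   \<Longrightarrow> styl_cong n (z # H @ [a]) (z # a # H)"
proof (induction H arbitrary: z)
  case Nil
  then show ?case by (simp add: styl_cong.refl)
next
  case (Cons h H)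
  have 1: "styl_cong n (h # H @ [a]) (h # a # H)"
    using Cons by auto
  have 2: "styl_cong n ([z] @ (h # H @ [a])) ([z] @ (h # a # H))"
    using cong_ctxL[OF 1] .
  have 3: "styl_cong n ([z,h,a] @ H) ([z,a,h] @ H)"
    apply (rule cong_ctxR, rule csym, rule R_jik) using Cons.prems by auto
  show ?case using ctrans[OF 2] 3 by simp
qed

lemma moveL: "sorted_wrt (<) (ys @ [b]) \<Longrightarrow> b < y \<Longrightarrow> y \<le> n \<Longrightarrow> (\<forall>x\<in>set ys. 1 \<le> x)
   \<Longrightarrow> styl_cong n (ys @ [y, b]) (y # ys @ [b])"
proof (induction ys arbitrary: b rule: rev_induct)
  case Nil
  then show ?case by (simp add: styl_cong.refl)
next
  case (snoc l zs)
  have s: "sorted_wrt (<) (zs @ [l])" "l < b"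
    using snoc.prems by (auto simp: sorted_wrt_append)
  have 1: "styl_cong n (zs @ [l,y,b]) (zs @ [y,l,b])"
    apply (rule cong_ctxL, rule R_ikj) using snoc.prems s by auto
  have 2: "styl_cong n (zs @ [y,l]) (y # zs @ [l])"
    using snoc.IH[OF s(1)] s snoc.prems by auto
  have 3: "styl_cong n ((zs @ [y,l]) @ [b]) ((y # zs @ [l]) @ [b])"
    using cong_ctxR[OF 2] .
  show ?case using ctrans[OF 1] 3 by simp
qed

definition bumpout :: "nat set \<Rightarrow> nat \<Rightarrow> nat list" where
  "bumpout C a = (if \<exists>x\<in>C. a < x then [LEAST x. x \<in> C \<and> a < x] else [])"

lemma row_lemma:
  assumes fin: "finite S" and Sn: "\<forall>x\<in>S. 1 \<le> x \<and> x \<le> n" and a: "1 \<le> a" "a \<le> n"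
  shows "styl_cong n (inc S @ [a]) (bumpout S a @ inc (insert a S))"
proof (cases "\<exists>x\<in>S. a < x")
  case True
  define y where "y = (LEAST x. x \<in> S \<and> a < x)"
  have yS: "y \<in> S" and ay: "a < y"
    using LeastI_ex[of "\<lambda>x. x \<in> S \<and> a < x"] True unfolding y_def by auto
  have ymin: "\<And>x. x \<in> S \<Longrightarrow> a < x \<Longrightarrow> y \<le> x"
    unfolding y_def by (simp add: Least_le)
  have bo: "bumpout S a = [y]" using True unfolding bumpout_def y_def by simp
  define L where "L = inc {x\<in>S. x < a}"
  define H where "H = inc {x\<in>S. y < x}"
  have Ls: "sorted_wrt (<) L" "set L = {x\<in>S. x < a}" unfolding L_def using fin by auto
  have Hs: "sorted_wrt (<) H" "set H = {x\<in>S. y < x}" unfolding H_def using fin by auto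
  have yn: "y \<le> n" using Sn yS by auto
  have Hn: "\<forall>h\<in>set H. h \<le> n" using Hs Sn by auto
  have L1: "\<forall>x\<in>set L. 1 \<le> x" using Ls Sn by auto
  have sLa: "sorted_wrt (<) (L @ [a])" using Ls by (auto simp: sorted_wrt_append)
  have syH: "sorted_wrt (<) (y # H)" using Hs by auto
  show ?thesis
  proof (cases "a \<in> S")
    case True
    have incS: "inc S = L @ a # y # H"
    proof (rule inc_eq[OF fin])
      show "sorted_wrt (<) (L @ a # y # H)"
        using Ls Hs ay by (auto simp: sorted_wrt_append)
      show "set (L @ a # y # H) = S"
        using Ls Hs True yS ymin by (auto; metis not_le le_neq_implies_less)
    qed
    have insS: "insert a S = S" using True by auto
    have 1: "styl_cong n (inc S @ [a]) (L @ [a,y,a] @ H)"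
      unfolding incS using cong_ctxL[OF moveH[OF syH ay a(1) Hn], of "L @ [a]"] by simp
    have e1: "styl_cong n [a,y,a] [y,a,y]"
    proof -
      have "styl_cong n [a,y,a] [y,a,a]" by (rule csym, rule R_jii) (use a ay yn in auto)
      moreover have "styl_cong n [y,a,a] [y,a]"
        using cong_ctxL[OF R_idem[OF a], of "[y]"] by simp
      moreover have "styl_cong n [y,a] [y,y,a]"
        using cong_ctxR[OF R_idem[of y n], of "[a]"] ay a yn by (simp add: csym)
      moreover have "styl_cong n [y,y,a] [y,a,y]" by (rule R_jji) (use a ay yn in auto)
      ultimately show ?thesis by (meson ctrans)
    qed
    have 2: "styl_cong n (L @ [a,y,a] @ H) (L @ [y,a,y] @ H)"
      using cong_ctx[OF e1] .
    have 3: "styl_cong n ((L @ [y,a]) @ ([y] @ H)) ((y # L @ [a]) @ ([y] @ H))"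
      using cong_ctxR[OF moveL[OF sLa ay yn L1]] .
    show ?thesis using ctrans[OF ctrans[OF 1 2] ] 3 unfolding bo insS incS by simp
  next
    case False
    have incS: "inc S = L @ y # H"
    proof (rule inc_eq[OF fin])
      show "sorted_wrt (<) (L @ y # H)"
        using Ls Hs ay by (auto simp: sorted_wrt_append)
      show "set (L @ y # H) = S"
        using Ls Hs False yS ymin by (auto; metis not_le le_neq_implies_less)
    qed
    have incS': "inc (insert a S) = L @ a # y # H"
    proof (rule inc_eq)
      show "finite (insert a S)" using fin by simp
      show "sorted_wrt (<) (L @ a # y # H)"
        using Ls Hs ay by (auto simp: sorted_wrt_append)
      show "set (L @ a # y # H) = insert a S"
        using Ls Hs False yS ymin by (auto; metis not_le le_neq_implies_less)
    qed
    have 1: "styl_cong n (inc S @ [a]) ((L @ [y, a]) @ H)"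
      unfolding incS using cong_ctxL[OF moveH[OF syH ay a(1) Hn], of "L"] by simp
    have mL: "styl_cong n (L @ [y, a]) (y # L @ [a])" by (rule moveL[OF sLa ay yn L1])
    have e2: "styl_cong n [y,a,y] [y,a]"
    proof -
      have "styl_cong n [y,a,y] [y,y,a]" by (rule csym, rule R_jji) (use a ay yn in auto)
      moreover have "styl_cong n [y,y,a] [y,a]"
        using cong_ctxR[OF R_idem[of y n], of "[a]"] ay a yn by simp
      ultimately show ?thesis by (meson ctrans)
    qed
    have 4: "styl_cong n ((L @ [y,a]) @ [y]) (L @ [y,a])"
      using cong_ctxL[OF e2, of L] by simp
    have 5: "styl_cong n ((L @ [y,a]) @ [y]) ((y # L @ [a]) @ [y])"
      using cong_ctxR[OF mL] .
    have 6: "styl_cong n (y # L @ [a]) (y # L @ [a, y])"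
      using ctrans[OF csym[OF mL] ctrans[OF csym[OF 4] 5]] by simp
    have 7: "styl_cong n ((L @ [y, a]) @ H) ((y # L @ [a]) @ H)" using cong_ctxR[OF mL] .
    have 8: "styl_cong n ((y # L @ [a]) @ H) ((y # L @ [a, y]) @ H)" using cong_ctxR[OF 6] .
    show ?thesis using ctrans[OF ctrans[OF 1 7] 8] unfolding bo incS' by simp
  qed
next
  case False
  have bo: "bumpout S a = []" using False unfolding bumpout_def by simp
  define L where "L = inc {x\<in>S. x < a}"
  have Ls: "sorted_wrt (<) L" "set L = {x\<in>S. x < a}" unfolding L_def using fin by auto
  show ?thesis
  proof (cases "a \<in> S")
    case True
    have incS: "inc S = L @ [a]"
    proof (rule inc_eq[OF fin])
      show "sorted_wrt (<) (L @ [a])"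
        using Ls by (auto simp: sorted_wrt_append)
      show "set (L @ [a]) = S"
        using Ls True False by (auto; metis not_le le_neq_implies_less)
    qed
    have insS: "insert a S = S" using True by auto
    show ?thesis unfolding bo insS incS using cong_ctxL[OF R_idem[OF a], of L] by simp
  next
    case aS: False
    have incS': "inc (insert a S) = inc S @ [a]"
    proof (rule inc_eq)
      show "finite (insert a S)" using fin by simp
      show "sorted_wrt (<) (inc S @ [a])"
        using False fin aS by (auto simp: sorted_wrt_append; metis not_le le_neq_implies_less)
      show "set (inc S @ [a]) = insert a S" using fin by auto
    qed
    show ?thesis unfolding bo incS' by (simp add: styl_cong.refl)
  qed
qed

fun bseq :: "nat set \<Rightarrow> nat list \<Rightarrow> nat list" where
  "bseq C [] = []"
| "bseq C (a # u) = bumpout C a @ bseq (insert a C) u"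

definition Bw :: "nat list \<Rightarrow> nat list" where "Bw u = bseq {} u"

lemma bseq_append: "bseq C (u @ v) = bseq C u @ bseq (C \<union> set u) v"
  by (induction u arbitrary: C) auto

lemma Bw_snoc: "Bw (u @ [a]) = Bw u @ bumpout (set u) a"
  unfolding Bw_def by (simp add: bseq_append)

lemma bumpout_set: "y \<in> set (bumpout C a) \<Longrightarrow> y \<in> C \<and> a < y"
  unfolding bumpout_def
  by (auto split: if_splits intro: LeastI2_ex)

lemma bseq_set: "y \<in> set (bseq C u) \<Longrightarrow> y \<in> C \<union> set u \<and> (\<exists>a\<in>set u. a < y)"
  by (induction u arbitrary: C) (auto dest: bumpout_set)

lemma Bw_set: "y \<in> set (Bw u) \<Longrightarrow> y \<in> set u \<and> (\<exists>a\<in>set u. a < y)"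
  unfolding Bw_def using bseq_set by fastforce

fun W :: "nat \<Rightarrow> nat list \<Rightarrow> nat list" where
  "W 0 v = []"
| "W (Suc k) v = W k (Bw v) @ inc (set v)"

lemma W_Nil: "W k [] = []"
  by (induction k) (auto simp: Bw_def)

lemma W_snoc: "(\<forall>x\<in>set v. n - k < x \<and> x \<le> n) \<Longrightarrow> n - k < a \<Longrightarrow> a \<le> n
  \<Longrightarrow> styl_cong n (W k v @ [a]) (W k (v @ [a]))"
proof (induction k arbitrary: v a)
  case 0
  then show ?case by simp
next
  case (Suc k)
  have row: "styl_cong n (inc (set v) @ [a]) (bumpout (set v) a @ inc (insert a (set v)))"
    by (rule row_lemma) (use Suc.prems in auto)
  have 1: "styl_cong n (W (Suc k) v @ [a]) (W k (Bw v) @ bumpout (set v) a @ inc (insert a (set v)))"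
    using cong_ctxL[OF row, of "W k (Bw v)"] by simp
  have BvOK: "\<forall>x\<in>set (Bw v). n - k < x \<and> x \<le> n"
  proof
    fix x assume "x \<in> set (Bw v)"
    then obtain b where "x \<in> set v" "b \<in> set v" "b < x" using Bw_set by blast
    then show "n - k < x \<and> x \<le> n" using Suc.prems by fastforce
  qed
  show ?case
  proof (cases "bumpout (set v) a")
    case Nil
    then show ?thesis using 1 by (simp add: Bw_snoc)
  next
    case (Cons y ys)
    then have ys: "ys = []" unfolding bumpout_def by (auto split: if_splits)
    have "y \<in> set v \<and> a < y" using bumpout_set[of y "set v" a] Cons by simp
    then have yOK: "n - k < y" "y \<le> n" using Suc.prems by auto
    have 2: "styl_cong n ((W k (Bw v) @ [y]) @ inc (insert a (set v))) (W k (Bw v @ [y]) @ inc (insert a (set v)))"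
      using cong_ctxR[OF Suc.IH[OF BvOK yOK]] .
    show ?thesis using ctrans[OF 1] 2 Cons ys by (simp add: Bw_snoc)
  qed
qed

lemma nf: "(\<forall>x\<in>set u. 1 \<le> x \<and> x \<le> n) \<Longrightarrow> styl_cong n u (W n u)"
proof (induction u rule: rev_induct)
  case Nil
  then show ?case by (simp add: W_Nil styl_cong.refl)
next
  case (snoc a u)
  have 1: "styl_cong n (u @ [a]) (W n u @ [a])" using cong_ctxR[OF snoc.IH] snoc.prems by simp
  have 2: "styl_cong n (W n u @ [a]) (W n (u @ [a]))"
    by (rule W_snoc) (use snoc.prems in auto)
  show ?case using ctrans[OF 1 2] .
qed

lemma subseq_set: "subseq xs ys \<Longrightarrow> set xs \<subseteq> set ys"
  by (induct rule: list_emb.induct) auto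

lemma subseq_snoc_notin: "y \<notin> set Z \<Longrightarrow> subseq (s @ [y]) (X @ Z) \<longleftrightarrow> subseq (s @ [y]) X"
proof
  assume y: "y \<notin> set Z" and h: "subseq (s @ [y]) (X @ Z)"
  from h obtain xs1 xs2 where e: "s @ [y] = xs1 @ xs2" "subseq xs1 X" "subseq xs2 Z"
    by (auto elim: subseq_appendE)
  show "subseq (s @ [y]) X"
  proof (cases "xs2 = []")
    case True then show ?thesis using e by simp
  next
    case False
    then have "last xs2 = y" using e(1) by (metis last_append last_snoc)
    then have "y \<in> set xs2" using False by auto
    then have "y \<in> set Z" using e(3) subseq_set by blast
    then show ?thesis using y by simp
  qed
next
  assume "subseq (s @ [y]) X" then show "subseq (s @ [y]) (X @ Z)"
    by (rule subseq_rev_drop_many)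
qed

lemma subseq_lastsplit: "p \<notin> set w \<Longrightarrow> subseq (t @ [p]) (v @ p # w) \<longleftrightarrow> subseq t v"
proof -
  assume p: "p \<notin> set w"
  have "subseq (t @ [p]) (v @ p # w) = subseq (t @ [p]) ((v @ [p]) @ w)" by simp
  also have "\<dots> = subseq (t @ [p]) (v @ [p])" by (rule subseq_snoc_notin[OF p])
  also have "\<dots> = subseq t v" by (rule subseq_append)
  finally show ?thesis .
qed

lemma bumpout_le: "y \<in> set (bumpout C a) \<Longrightarrow> x \<in> C \<Longrightarrow> a < x \<Longrightarrow> y \<le> x"
  unfolding bumpout_def by (auto split: if_splits intro: Least_le)

lemma bseq_noy: "p \<in> C \<Longrightarrow> p < y \<Longrightarrow> p \<notin> set w \<Longrightarrow> (\<forall>b\<in>set w. \<not>(p < b \<and> b < y))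
  \<Longrightarrow> y \<notin> set (bseq C w)"
proof (induction w arbitrary: C)
  case Nil
  then show ?case by simp
next
  case (Cons b w)
  have "y \<notin> set (bumpout C b)"
  proof
    assume yb: "y \<in> set (bumpout C b)"
    then have "b < y" using bumpout_set by blast
    moreover have "b \<noteq> p" using Cons.prems by auto
    ultimately have "b < p" using Cons.prems by auto
    then have "y \<le> p" using bumpout_le[OF yb Cons.prems(1)] by simp
    then show False using Cons.prems by simp
  qed
  moreover have "y \<notin> set (bseq (insert b C) w)"
    by (rule Cons.IH) (use Cons.prems in auto)
  ultimately show ?case by simp
qed

lemma char_lemma:
  assumes u: "u = v @ p # w" and pw: "p \<notin> set w" and py: "p < y"
    and tight: "\<forall>z\<in>set u. \<not>(p < z \<and> z < y)"
  shows "subseq (s @ [y]) (Bw u) \<longleftrightarrow> y \<in> set v \<and> subseq s (Bw v)"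
proof -
  have Bu: "Bw u = (Bw v @ bumpout (set v) p) @ bseq (insert p (set v)) w"
    unfolding u Bw_def by (simp add: bseq_append)
  have vu: "set v \<subseteq> set u" and wu: "set w \<subseteq> set u" using u by auto
  have tw: "\<forall>b\<in>set w. \<not>(p < b \<and> b < y)" using tight wu by blast
  have ny: "y \<notin> set (bseq (insert p (set v)) w)"
    by (rule bseq_noy[OF _ py pw tw]) simp
  have "subseq (s @ [y]) (Bw u) \<longleftrightarrow> subseq (s @ [y]) (Bw v @ bumpout (set v) p)"
    unfolding Bu by (rule subseq_snoc_notin[OF ny])
  also have "\<dots> \<longleftrightarrow> y \<in> set v \<and> subseq s (Bw v)"
  proof (cases "y \<in> set v")
    case True
    have "(LEAST x. x \<in> set v \<and> p < x) = y"
    proof (rule Least_equality)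
      show "y \<in> set v \<and> p < y" using True py by simp
      show "\<And>x. x \<in> set v \<and> p < x \<Longrightarrow> y \<le> x"
      proof -
        fix x assume "x \<in> set v \<and> p < x"
        then have "x \<in> set u" "p < x" using vu by auto
        then show "y \<le> x" using tight by (meson not_le)
      qed
    qed
    then have "bumpout (set v) p = [y]" unfolding bumpout_def using True py by auto
    then show ?thesis using True by simp
  next
    case False
    have s1: "set (Bw v) \<subseteq> set v" using Bw_set by blast
    have s2: "set (bumpout (set v) p) \<subseteq> set v" using bumpout_set by blast
    have yn: "y \<notin> set (Bw v @ bumpout (set v) p)"
      using False s1 s2 by auto
    have "\<not> subseq (s @ [y]) (Bw v @ bumpout (set v) p)"
    proof
      assume "subseq (s @ [y]) (Bw v @ bumpout (set v) p)"
      then have "set (s @ [y]) \<subseteq> set (Bw v @ bumpout (set v) p)" by (rule subseq_set)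
      then show False using yn by simp
    qed
    then show ?thesis using False by simp
  qed
  finally show ?thesis .
qed

lemma lemL: "(\<forall>t. length t \<le> Suc m \<longrightarrow> (subseq t u \<longleftrightarrow> subseq t u')) \<Longrightarrow> length s \<le> m
  \<Longrightarrow> subseq s (Bw u) \<Longrightarrow> subseq s (Bw u')"
proof (induction s arbitrary: u u' m rule: rev_induct)
  case Nil
  then show ?case by simp
next
  case (snoc y s)
  have eqv: "\<And>t. length t \<le> Suc m \<Longrightarrow> subseq t u \<longleftrightarrow> subseq t u'" using snoc.prems(1) by blast
  have "\<And>x. x \<in> set u \<longleftrightarrow> x \<in> set u'"
  proof -
    fix x :: nat
    have "subseq [x] u \<longleftrightarrow> subseq [x] u'" using eqv[of "[x]"] by simp
    then show "x \<in> set u \<longleftrightarrow> x \<in> set u'" by (simp add: subseq_singleton_left)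
  qed
  then have setu: "set u = set u'" by blast
  obtain m' where m: "m = Suc m'" using snoc.prems(2) by (cases m) auto
  have "y \<in> set (Bw u)" using subseq_set[OF snoc.prems(3)] by auto
  then obtain b where b: "b \<in> set u" "b < y" using Bw_set by blast
  define p where "p = Max {z \<in> set u. z < y}"
  have fin: "finite {z \<in> set u. z < y}" by simp
  have ne: "{z \<in> set u. z < y} \<noteq> {}" using b by auto
  have pu: "p \<in> set u" "p < y" using Max_in[OF fin ne] unfolding p_def by auto
  have tight: "\<forall>z\<in>set u. \<not>(p < z \<and> z < y)"
    using Max_ge[OF fin] unfolding p_def by fastforce
  have pu': "p \<in> set u'" and tight': "\<forall>z\<in>set u'. \<not>(p < z \<and> z < y)"
    using pu tight setu by auto
  obtain v w where vw: "u = v @ p # w" "p \<notin> set w" using split_list_last[OF pu(1)] by blast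
  obtain v' w' where vw': "u' = v' @ p # w'" "p \<notin> set w'" using split_list_last[OF pu'] by blast
  have c1: "y \<in> set v \<and> subseq s (Bw v)"
    using char_lemma[OF vw pu(2) tight] snoc.prems(3) by simp
  have "subseq ([y] @ [p]) u" using c1 subseq_lastsplit[OF vw(2), of "[y]" v] vw(1)
    by (simp add: subseq_singleton_left)
  then have "subseq ([y] @ [p]) u'" using eqv[of "[y] @ [p]"] m by simp
  then have yv': "y \<in> set v'" using subseq_lastsplit[OF vw'(2), of "[y]" v'] vw'(1)
    by (simp add: subseq_singleton_left)
  have vv: "\<forall>t. length t \<le> Suc m' \<longrightarrow> (subseq t v \<longleftrightarrow> subseq t v')"
  proof (intro allI impI)
    fix t :: "nat list" assume "length t \<le> Suc m'"
    then have "length (t @ [p]) \<le> Suc m" using m by simp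
    then have "subseq (t @ [p]) u \<longleftrightarrow> subseq (t @ [p]) u'" using eqv by blast
    then show "subseq t v \<longleftrightarrow> subseq t v'"
      using subseq_lastsplit[OF vw(2), of t v] subseq_lastsplit[OF vw'(2), of t v'] vw(1) vw'(1)
      by simp
  qed
  have "length s \<le> m'" using snoc.prems(2) m by simp
  then have "subseq s (Bw v')" using snoc.IH[OF vv] c1 by blast
  then show ?case using char_lemma[OF vw'(1,2) pu(2) tight'] yv' by simp
qed

lemma W_det: "(\<forall>t. length t \<le> k \<longrightarrow> (subseq t v \<longleftrightarrow> subseq t v')) \<Longrightarrow> W k v = W k v'"
proof (induction k arbitrary: v v')
  case 0
  then show ?case by simp
next
  case (Suc k)
  have "\<And>x. x \<in> set v \<longleftrightarrow> x \<in> set v'"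
  proof -
    fix x :: nat
    have "subseq [x] v \<longleftrightarrow> subseq [x] v'" using Suc.prems[rule_format, of "[x]"] by simp
    then show "x \<in> set v \<longleftrightarrow> x \<in> set v'" by (simp add: subseq_singleton_left)
  qed
  then have setv: "set v = set v'" by blast
  have s2: "\<forall>t. length t \<le> Suc k \<longrightarrow> (subseq t v' \<longleftrightarrow> subseq t v)" using Suc.prems by blast
  have "\<forall>t. length t \<le> k \<longrightarrow> (subseq t (Bw v) \<longleftrightarrow> subseq t (Bw v'))"
    using lemL[OF Suc.prems] lemL[OF s2] by blast
  then show ?case using Suc.IH setv by simp
qed

lemma hom_concat: "styl_hom n \<phi> \<Longrightarrow> styl_cong n (\<phi> w) (concat (map (\<lambda>x. \<phi> [x]) w))"
proof (induction w)
  case Nil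
  then show ?case unfolding styl_hom_def by simp
next
  case (Cons x w)
  have 1: "styl_cong n (\<phi> ([x] @ w)) (\<phi> [x] @ \<phi> w)" using Cons.prems unfolding styl_hom_def by blast
  have 2: "styl_cong n (\<phi> [x] @ \<phi> w) (\<phi> [x] @ concat (map (\<lambda>x. \<phi> [x]) w))"
    using cong_ctxL[OF Cons.IH[OF Cons.prems]] .
  show ?case using ctrans[OF 1 2] by simp
qed

lemma concat_mono: "subseq w0 w \<Longrightarrow> subseq (concat (map h w0)) (concat (map h w))"
proof (induction rule: list_emb.induct)
  case (list_emb_Nil ys)
  then show ?case by simp
next
  case (list_emb_Cons xs ys y)
  then show ?case by (simp add: subseq_drop_many)
next
  case (list_emb_Cons2 x y xs ys)
  then show ?case by (simp add: list_emb_append_mono)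
qed

lemma concat_sub: "subseq s (concat (map h w)) \<Longrightarrow>
   \<exists>w0. subseq w0 w \<and> length w0 \<le> length s \<and> subseq s (concat (map h w0))"
proof (induction w arbitrary: s)
  case Nil
  then show ?case by (intro exI[of _ "[]"]) simp
next
  case (Cons x w)
  from Cons.prems obtain s1 s2 where s: "s = s1 @ s2" "subseq s1 (h x)" "subseq s2 (concat (map h w))"
    by (auto elim: subseq_appendE)
  obtain w0 where w0: "subseq w0 w" "length w0 \<le> length s2" "subseq s2 (concat (map h w0))"
    using Cons.IH[OF s(3)] by blast
  show ?case
  proof (cases "s1 = []")
    case True
    then show ?thesis using w0 s by (intro exI[of _ w0]) auto
  next
    case False
    have "subseq (s1 @ s2) (h x @ concat (map h w0))" using s(2) w0(3) by (rule list_emb_append_mono)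
    then have c3: "subseq s (concat (map h (x # w0)))" using s(1) by simp
    have c1: "subseq (x # w0) (x # w)" using w0(1) by simp
    have "length s1 \<ge> 1" using False by (cases s1) auto
    then have c2: "length (x # w0) \<le> length s" using s(1) w0(2) by simp
    show ?thesis using c1 c2 c3 by blast
  qed
qed

lemma backward:
  assumes eq: "scattered_subwords_le n w = scattered_subwords_le n w'" and hom: "styl_hom n \<phi>"
  shows "styl_cong n (\<phi> w) (\<phi> w')"
proof -
  define h where "h x = \<phi> [x]" for x
  define A where "A = concat (map h w)"
  define A' where "A' = concat (map h w')"
  have sub: "\<And>s. subseq s w \<and> length s \<le> n \<longleftrightarrow> subseq s w' \<and> length s \<le> n"
    using eq unfolding scattered_subwords_le_def by (simp add: set_eq_iff)
  have tr: "\<And>w1 w2 t. (\<And>s. subseq s w1 \<and> length s \<le> n \<Longrightarrow> subseq s w2) \<Longrightarrow> length t \<le> n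
      \<Longrightarrow> subseq t (concat (map h w1)) \<Longrightarrow> subseq t (concat (map h w2))"
  proof -
    fix w1 w2 t
    assume H: "\<And>s. subseq s w1 \<and> length s \<le> n \<Longrightarrow> subseq s w2" and l: "length t \<le> n"
      and t: "subseq t (concat (map h w1))"
    obtain w0 where w0: "subseq w0 w1" "length w0 \<le> length t" "subseq t (concat (map h w0))"
      using concat_sub[OF t] by blast
    have "subseq w0 w2" using H w0 l by simp
    then have "subseq (concat (map h w0)) (concat (map h w2))" by (rule concat_mono)
    then show "subseq t (concat (map h w2))" using w0(3) by (meson subseq_order.trans)
  qed
  have AA: "\<forall>t. length t \<le> n \<longrightarrow> (subseq t A \<longleftrightarrow> subseq t A')"
  proof (intro allI impI iffI)
    fix t :: "nat list" assume l: "length t \<le> n"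
    have H1: "\<And>s. subseq s w \<and> length s \<le> n \<Longrightarrow> subseq s w'" using sub by blast
    have H2: "\<And>s. subseq s w' \<and> length s \<le> n \<Longrightarrow> subseq s w" using sub by blast
    show "subseq t A \<Longrightarrow> subseq t A'" unfolding A_def A'_def using tr[OF H1 l] by blast
    show "subseq t A' \<Longrightarrow> subseq t A" unfolding A_def A'_def using tr[OF H2 l] by blast
  qed
  have hw: "\<And>y. set (h y) \<subseteq> {1..n}"
    using hom unfolding styl_hom_def styl_words_def h_def by blast
  have letters: "\<And>v. \<forall>x\<in>set (concat (map h v)). 1 \<le> x \<and> x \<le> n"
  proof
    fix v x assume "x \<in> set (concat (map h v))"
    then obtain y where "x \<in> set (h y)" by auto
    then show "1 \<le> x \<and> x \<le> n" using hw[of y] by auto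
  qed
  have 1: "styl_cong n (\<phi> w) A" unfolding A_def h_def by (rule hom_concat[OF hom])
  have 2: "styl_cong n (\<phi> w') A'" unfolding A'_def h_def by (rule hom_concat[OF hom])
  have 3: "styl_cong n A (W n A)" using nf letters unfolding A_def by blast
  have 4: "styl_cong n A' (W n A')" using nf letters unfolding A'_def by blast
  have 5: "W n A = W n A'" by (rule W_det[OF AA])
  have 6: "styl_cong n (W n A) (\<phi> w')" using csym[OF ctrans[OF 2 4]] 5 by simp
  show ?thesis by (rule ctrans[OF ctrans[OF 1 3] 6])
qed

fun cdec :: "nat list \<Rightarrow> bool" where
  "cdec [] = True"
| "cdec [x] = True"
| "cdec (x # y # zs) = (x = Suc y \<and> cdec (y # zs))"

lemma cdec_Cons: "cdec (x # ys) \<Longrightarrow> cdec ys"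
  by (cases ys) auto

lemma cdec_append: "cdec (xs @ ys) \<Longrightarrow> cdec xs \<and> cdec ys"
proof (induction xs)
  case Nil
  then show ?case by simp
next
  case (Cons x xs)
  show ?case
  proof (cases xs)
    case Nil
    then show ?thesis using Cons.prems by (auto dest: cdec_Cons)
  next
    case (Cons x' xs')
    then show ?thesis using Cons.prems Cons.IH by auto
  qed
qed

lemma sub1: "subseq d [a] \<longleftrightarrow> d = [] \<or> d = [a]"
  by (simp flip: in_set_subseqs) blast
lemma sub2: "subseq d [a,b] \<longleftrightarrow> d = [] \<or> d = [a] \<or> d = [b] \<or> d = [a,b]"
  by (simp flip: in_set_subseqs) blast
lemma sub3: "subseq d [a,b,c] \<longleftrightarrow> d = [] \<or> d = [a] \<or> d = [b] \<or> d = [c] \<or> d = [a,b] \<or> d = [a,c] \<or> d = [b,c] \<or> d = [a,b,c]"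
  by (simp flip: in_set_subseqs) blast

lemma inv_idem: "cdec d \<Longrightarrow> subseq d [i,i] \<longleftrightarrow> subseq d [i]"
  by (auto simp: sub1 sub2)
lemma inv_jik: "i < j \<Longrightarrow> j < k \<Longrightarrow> cdec d \<Longrightarrow> subseq d [j,i,k] \<longleftrightarrow> subseq d [j,k,i]"
  unfolding sub3 by auto
lemma inv_ikj: "i < j \<Longrightarrow> j < k \<Longrightarrow> cdec d \<Longrightarrow> subseq d [i,k,j] \<longleftrightarrow> subseq d [k,i,j]"
  unfolding sub3 by auto
lemma inv_jii: "i < j \<Longrightarrow> cdec d \<Longrightarrow> subseq d [j,i,i] \<longleftrightarrow> subseq d [i,j,i]"
  unfolding sub3 by auto
lemma inv_jji: "i < j \<Longrightarrow> cdec d \<Longrightarrow> subseq d [j,j,i] \<longleftrightarrow> subseq d [j,i,j]"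
  unfolding sub3 by auto

lemma rel_inv: "(l, r) \<in> styl_rels n \<Longrightarrow> cdec d \<Longrightarrow> subseq d l \<longleftrightarrow> subseq d r"
  unfolding styl_rels_def
  apply (simp only: Un_iff mem_Collect_eq)
  apply (elim disjE exE conjE)
      apply (simp_all add: inv_idem inv_jii inv_jji)
   apply (rule inv_jik; assumption)
  apply (rule inv_ikj; assumption)
  done

lemma rel_step: "(l, r) \<in> styl_rels n \<Longrightarrow> cdec d \<Longrightarrow> subseq d (u @ l @ v) \<Longrightarrow> subseq d (u @ r @ v)"
proof -
  assume lr: "(l, r) \<in> styl_rels n" and c: "cdec d" and h: "subseq d (u @ l @ v)"
  from h obtain d1 d23 where a: "d = d1 @ d23" "subseq d1 u" "subseq d23 (l @ v)"
    by (auto elim: subseq_appendE)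
  from a(3) obtain d2 d3 where b: "d23 = d2 @ d3" "subseq d2 l" "subseq d3 v"
    by (auto elim: subseq_appendE)
  have "cdec d2" using c a(1) b(1) cdec_append by metis
  then have "subseq d2 r" using rel_inv[OF lr] b(2) by blast
  then have q: "subseq (d2 @ d3) (r @ v)" using b(3) by (rule list_emb_append_mono)
  have "subseq (d1 @ d2 @ d3) (u @ r @ v)" using list_emb_append_mono[OF a(2) q] .
  then show ?thesis using a(1) b(1) by simp
qed

lemma rel_step': "(l, r) \<in> styl_rels n \<Longrightarrow> cdec d \<Longrightarrow> subseq d (u @ r @ v) \<Longrightarrow> subseq d (u @ l @ v)"
proof -
  assume lr: "(l, r) \<in> styl_rels n" and c: "cdec d" and h: "subseq d (u @ r @ v)"
  from h obtain d1 d23 where a: "d = d1 @ d23" "subseq d1 u" "subseq d23 (r @ v)"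
    by (auto elim: subseq_appendE)
  from a(3) obtain d2 d3 where b: "d23 = d2 @ d3" "subseq d2 r" "subseq d3 v"
    by (auto elim: subseq_appendE)
  have "cdec d2" using c a(1) b(1) cdec_append by metis
  then have "subseq d2 l" using rel_inv[OF lr] b(2) by blast
  then have q: "subseq (d2 @ d3) (l @ v)" using b(3) by (rule list_emb_append_mono)
  have "subseq (d1 @ d2 @ d3) (u @ l @ v)" using list_emb_append_mono[OF a(2) q] .
  then show ?thesis using a(1) b(1) by simp
qed

lemma cong_inv: "styl_cong n A A' \<Longrightarrow> cdec d \<Longrightarrow> subseq d A \<longleftrightarrow> subseq d A'"
proof (induction rule: styl_cong.induct)
  case (rel l r u v)
  then show ?case using rel_step[OF rel(1)] rel_step'[OF rel(1)] by blast
qed auto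

fun decw :: "nat \<Rightarrow> nat list" where
  "decw 0 = []"
| "decw (Suc k) = Suc k # decw k"

lemma cdec_decw: "cdec (decw k)"
proof (induction k)
  case 0 then show ?case by simp
next
  case (Suc k) then show ?case by (cases k) auto
qed

lemma length_decw: "length (decw k) = k"
  by (induction k) auto

lemma nth_decw: "i < k \<Longrightarrow> decw k ! i = k - i"
proof (induction k arbitrary: i)
  case 0 then show ?case by simp
next
  case (Suc k) then show ?case by (cases i) auto
qed

lemma set_decw: "x \<in> set (decw k) \<Longrightarrow> 1 \<le> x \<and> x \<le> k"
  by (induction k) auto

lemma sorted_decw: "sorted_wrt (>) (decw k)"
  by (induction k) (auto dest: set_decw)

lemma subseq_sorted: "subseq xs ys \<Longrightarrow> sorted_wrt P ys \<Longrightarrow> sorted_wrt P xs"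
proof (induction rule: list_emb.induct)
  case (list_emb_Nil ys) then show ?case by simp
next
  case (list_emb_Cons xs ys y) then show ?case by simp
next
  case (list_emb_Cons2 x y xs ys) then show ?case using subseq_set by fastforce
qed

lemma dec_extract:
  fixes g :: "'x \<Rightarrow> nat list" and f :: "nat \<Rightarrow> 'x" and e :: "nat list"
  assumes gs: "\<forall>x. sorted_wrt (<) (g x)" and gf: "\<forall>x c. c \<in> set (g x) \<longrightarrow> f c = x"
  shows "sorted_wrt (>) e \<Longrightarrow> subseq e (concat (map g v)) \<Longrightarrow> subseq (map f e) v"
proof (induction v arbitrary: e)
  case Nil
  then show ?case by (cases e) auto
next
  case (Cons x v)
  from Cons.prems(2) obtain e1 e2 where e: "e = e1 @ e2" "subseq e1 (g x)" "subseq e2 (concat (map g v))"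
    by (auto elim: subseq_appendE)
  have s1: "sorted_wrt (>) e1" "sorted_wrt (>) e2" using Cons.prems(1) e(1) by (auto simp: sorted_wrt_append)
  have s1': "sorted_wrt (<) e1" using subseq_sorted[OF e(2)] gs by blast
  have IH2: "subseq (map f e2) v" using Cons.IH[OF s1(2) e(3)] .
  show ?case
  proof (cases e1)
    case Nil
    then show ?thesis using IH2 e by auto
  next
    case (Cons c e1')
    have "e1' = []"
    proof (cases e1')
      case (Cons c' e1'')
      then have ee: "e1 = c # c' # e1''" using \<open>e1 = c # e1'\<close> by simp
      have "c' < c" using s1(1) ee by simp
      moreover have "c < c'" using s1' ee by simp
      ultimately show ?thesis by simp
    qed simp
    then have "e1 = [c]" using Cons by simp
    then have "c \<in> set (g x)" using e(2) by (simp add: subseq_singleton_left)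
    then have "f c = x" using gf by blast
    then show ?thesis using IH2 e \<open>e1 = [c]\<close> by simp
  qed
qed

lemma allsub: "list_all2 (\<lambda>c x. c \<in> set (g x)) e xs \<Longrightarrow> subseq e (concat (map g xs))"
proof (induction rule: list_all2_induct)
  case Nil then show ?case by simp
next
  case (Cons c e x xs)
  have "subseq [c] (g x)" using Cons.hyps(1) by (simp add: subseq_singleton_left)
  then have "subseq ([c] @ e) (g x @ concat (map g xs))" using Cons.IH by (rule list_emb_append_mono)
  then show ?case by simp
qed

lemma forward1:
  assumes H: "holds_in_styl n w w'" and s: "subseq s w" and ls: "length s \<le> n"
  shows "subseq s w'"
proof -
  define k where "k = length s"
  define f where "f c = s ! (k - c)" for c
  define g where "g x = filter (\<lambda>c. f c = x) [1..<Suc k]" for x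
  define \<phi> where "\<phi> v = concat (map g v)" for v
  have gs: "\<forall>x. sorted_wrt (<) (g x)" unfolding g_def by (intro allI sorted_wrt_filter sorted_wrt_upt)
  have gf: "\<forall>x c. c \<in> set (g x) \<longrightarrow> f c = x" unfolding g_def by simp
  have gset: "\<And>x c. c \<in> set (g x) \<Longrightarrow> 1 \<le> c \<and> c \<le> n" unfolding g_def using ls k_def by auto
  have hom: "styl_hom n \<phi>"
    unfolding styl_hom_def
  proof (intro conjI allI)
    fix v
    show "\<phi> v \<in> styl_words n" unfolding styl_words_def \<phi>_def using gset by fastforce
  next
    show "styl_cong n (\<phi> []) []" unfolding \<phi>_def by (simp add: styl_cong.refl)
  next
    fix u v
    show "styl_cong n (\<phi> (u @ v)) (\<phi> u @ \<phi> v)" unfolding \<phi>_def by (simp add: styl_cong.refl)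
  qed
  have c: "styl_cong n (\<phi> w) (\<phi> w')" using H hom unfolding holds_in_styl_def by blast
  have la: "list_all2 (\<lambda>c x. c \<in> set (g x)) (decw k) s"
    unfolding list_all2_conv_all_nth
  proof (intro conjI allI impI)
    show "length (decw k) = length s" by (simp add: length_decw k_def)
    fix i assume "i < length (decw k)"
    then have i: "i < k" by (simp add: length_decw)
    show "decw k ! i \<in> set (g (s ! i))"
      unfolding g_def f_def using i by (cases i) (auto simp: nth_decw)
  qed
  have "subseq (decw k) (\<phi> s)" unfolding \<phi>_def by (rule allsub[OF la])
  moreover have "subseq (\<phi> s) (\<phi> w)" unfolding \<phi>_def by (rule concat_mono[OF s])
  ultimately have "subseq (decw k) (\<phi> w)" by (meson subseq_order.trans)
  then have "subseq (decw k) (\<phi> w')" using cong_inv[OF c cdec_decw] by blast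
  then have "subseq (map f (decw k)) w'"
    using dec_extract[OF gs gf sorted_decw] unfolding \<phi>_def by blast
  moreover have "map f (decw k) = s"
  proof (rule nth_equalityI)
    show "length (map f (decw k)) = length s" by (simp add: length_decw k_def)
    fix i assume "i < length (map f (decw k))"
    then have i: "i < k" by (simp add: length_decw)
    then show "map f (decw k) ! i = s ! i" by (simp add: f_def nth_decw length_decw)
  qed
  ultimately show ?thesis by simp
qed

theorem corollary1:
  fixes n :: nat and w w' :: "'x list"
  assumes "n \<ge> 2"
  shows "holds_in_styl n w w' \<longleftrightarrow> scattered_subwords_le n w = scattered_subwords_le n w'"
proof
  assume H: "holds_in_styl n w w'"
  have H': "holds_in_styl n w' w" using H unfolding holds_in_styl_def by (blast intro: csym)
  show "scattered_subwords_le n w = scattered_subwords_le n w'"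
    unfolding scattered_subwords_le_def using forward1[OF H] forward1[OF H'] by blast
next
  assume "scattered_subwords_le n w = scattered_subwords_le n w'"
  then show "holds_in_styl n w w'" unfolding holds_in_styl_def using backward by blast
qed

end
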